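(* Let $K$ be a perfect field of characteristic $p>0$ and let $\theta:K[x]\to K[x^p]$ be the $\mathbb{F}_p$-linear map $\theta(f)=f^p+\frac{d^{p-1}f}{dx^{p-1}}$. Then: (1) the associated graded map $\mathrm{gr}(\theta)$, which equals the Frobenius $F:K[x]\to K[x^p]$, $f\mapsto f^p$, is an isomorphism of $\mathbb{F}_p$-algebras; (2) $\theta$ is an isomorphism of $\mathbb{F}_p$-vector spaces such that $\theta(K[x]_{\le i})=K[x^p]_{\le i}$ for all $i\ge 0$; (3) for each $f\in K[x]$, $l(\theta(f))=l(f)^p$.
   Context: $K[x]_{\le i}=\{f\in K[x]\mid \deg_x f\le i\}$ and $K[x^p]_{\le i}=\{g\in K[x^p]\mid \deg_{x^p}g\le i\}$; these are filtrations whose associated graded algebras are canonically identified with $K[x]$ and $K[x^p]$, and $\theta$ respects them, i.e. $\theta(K[x]_{\le i})\subseteq K[x^p]_{\le i}$. For $f=\sum_{i=0}^d\lambda_ix^i$ with $\lambda_d\ne0$, the leading term is $l(f)=\lambda_dx^d$; for $g=\sum_{i=0}^d\mu_ix^{pi}\in K[x^p]$ with $\mu_d\neq 0$, $l(g)=\mu_dx^{pd}$. *)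

theory Defs
  imports "HOL-Computational_Algebra.Polynomial"
begin

definition Kxp :: "nat \<Rightarrow> 'a::zero poly set" where
  "Kxp p = {g. \<forall>i. \<not> p dvd i \<longrightarrow> coeff g i = 0}"

text \<open>Filtration pieces K[x]_{<= i} and K[x^p]_{<= i} (degree measured in x^p).\<close>
definition Kx_le :: "nat \<Rightarrow> 'a::zero poly set" where
  "Kx_le i = {f. degree f \<le> i}"

definition Kxp_le :: "nat \<Rightarrow> nat \<Rightarrow> 'a::zero poly set" where
  "Kxp_le p i = {g \<in> Kxp p. degree g \<le> p * i}"

definition theta :: "nat \<Rightarrow> 'a::field poly \<Rightarrow> 'a poly" where
  "theta p f = f ^ p + (pderiv ^^ (p - 1)) f"

text \<open>Leading term l(f) = lambda_d x^d (as a polynomial in x; for g in K[x^p] this is mu_d x^{pd}).\<close>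
definition lterm :: "'a::zero poly \<Rightarrow> 'a poly" where
  "lterm f = monom (lead_coeff f) (degree f)"

end

theory Submission
  imports Defs "HOL-Computational_Algebra.Computational_Algebra"
begin

lemma D_coeff: "coeff ((pderiv ^^ k) f) j = pochhammer (of_nat (j+1)) k * coeff f (j+k)"
proof (induction k arbitrary: j)
  case 0 then show ?case by simp
next
  case (Suc k)
  have "coeff ((pderiv ^^ Suc k) f) j = of_nat (Suc j) * coeff ((pderiv ^^ k) f) (Suc j)"
    by (simp add: coeff_pderiv)
  also have "\<dots> = of_nat (Suc j) * (pochhammer (of_nat (Suc j + 1)) k * coeff f (Suc j + k))"
    using Suc by simp
  also have "\<dots> = pochhammer (of_nat (j+1)) (Suc k) * coeff f (j + Suc k)"
    by (simp add: pochhammer_rec add_ac mult.assoc)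
  finally show ?case .
qed

lemma D_add: "(pderiv ^^ k) (f + g) = (pderiv ^^ k) f + (pderiv ^^ k) g"
  by (induction k) (auto simp: pderiv_add)

lemma D_zero:
  assumes "CHAR('a::field) = p" "p > 0" "\<not> p dvd j"
  shows "coeff ((pderiv ^^ (p - 1)) (f::'a poly)) j = 0"
proof -
  define i where "i = p - 1 - j mod p"
  have jm: "j mod p \<ge> 1" "j mod p < p" using assms by (auto simp: Suc_le_eq mod_greater_zero_iff_not_dvd)
  have "i < p - 1" using jm unfolding i_def by linarith
  moreover have "p dvd (j + 1 + i)"
  proof -
    have e: "j = p*(j div p) + j mod p" by simp
    have "j + 1 + i = p * (j div p) + p" using jm unfolding i_def
      by (subst e) linarith
    then show ?thesis by simp
  qed
  ultimately have "p dvd pochhammer (j+1) (p-1)"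
  proof -
    assume a: "i < p - 1" "p dvd (j + 1 + i)"
    have "(j+1) + of_nat i dvd (\<Prod>l\<in>{0..<p-1}. (j+1) + of_nat l)"
      by (rule dvd_prodI) (use a in auto)
    thus ?thesis unfolding pochhammer_prod using a(2) dvd_trans by auto
  qed
  hence "(of_nat (pochhammer (j+1) (p-1)) :: 'a) = 0"
    using assms(1) of_nat_eq_0_iff_char_dvd by blast
  thus ?thesis by (simp add: D_coeff pochhammer_of_nat[symmetric])
qed

lemma D_zero_poly: "(pderiv ^^ k) 0 = 0"
  by (induction k) auto

lemma Kxp_add: "f \<in> Kxp p \<Longrightarrow> g \<in> Kxp p \<Longrightarrow> f + g \<in> Kxp p"
  by (auto simp: Kxp_def)

lemma Kxp_uminus: "(f::'a::ab_group_add poly) \<in> Kxp p \<Longrightarrow> - f \<in> Kxp p"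
  by (auto simp: Kxp_def)

lemma D_Kxp:
  assumes "CHAR('a::field) = p" "p > 0"
  shows "(pderiv ^^ (p - 1)) (f::'a poly) \<in> Kxp p"
  using D_zero[OF assms] unfolding Kxp_def by auto

lemma D_deg:
  assumes "CHAR('a::field) = p" "p > 0"
    and "(pderiv ^^ (p - 1)) (f::'a poly) \<noteq> 0"
  shows "degree ((pderiv ^^ (p - 1)) f) + (p - 1) \<le> degree f"
proof -
  let ?d = "degree ((pderiv ^^ (p - 1)) f)"
  have "coeff ((pderiv ^^ (p - 1)) f) ?d \<noteq> 0" using assms(3) by simp
  hence "coeff f (?d + (p - 1)) \<noteq> 0" by (simp add: D_coeff)
  thus ?thesis by (rule le_degree)
qed

lemma frob_Kxp:
  assumes "CHAR('a::field) = p" "prime p"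
  shows "(f::'a poly) ^ p \<in> Kxp p"
proof -
  have cp: "CHAR('a poly) = p" using assms by simp
  have "f ^ p = (\<Sum>i\<le>degree f. monom (coeff f i) i) ^ p"
    by (simp add: poly_as_sum_of_monoms)
  also have "\<dots> = (\<Sum>i\<le>degree f. monom (coeff f i ^ p) (i * p))"
    by (subst freshmans_dream_sum) (use cp assms in \<open>auto simp: monom_power\<close>)
  finally have e: "f ^ p = (\<Sum>i\<le>degree f. monom (coeff f i ^ p) (i * p))" .
  show ?thesis unfolding Kxp_def
    by (auto simp: e coeff_sum intro!: sum.neutral)
qed

lemma frob_add:
  assumes "CHAR('a::field) = p" "prime p"
  shows "((f::'a poly) + g) ^ p = f ^ p + g ^ p"
  by (rule freshmans_dream) (use assms in auto)

lemma frob_diff: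
  assumes "CHAR('a::field) = p" "prime p"
  shows "((f::'a poly) - g) ^ p = f ^ p - g ^ p"
  using frob_add[OF assms, of "f - g" g] by (simp add: algebra_simps)

lemma frob_inj:
  assumes "CHAR('a::field) = p" "prime p"
  shows "inj (\<lambda>f::'a poly. f ^ p)"
proof (rule injI)
  fix f g :: "'a poly" assume "f ^ p = g ^ p"
  hence "(f - g) ^ p = 0" by (simp add: frob_diff[OF assms])
  thus "f = g" by simp
qed

lemma frob_surj:
  assumes "CHAR('a::field) = p" "prime p" and perfect: "surj (\<lambda>x::'a. x ^ p)"
    and g: "(g::'a poly) \<in> Kxp p"
  shows "\<exists>f. f ^ p = g"
proof -
  have cp: "CHAR('a poly) = p" using assms by simp
  have p0: "p > 0" using assms prime_gt_0_nat by blast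
  define r where "r = inv (\<lambda>x::'a. x ^ p)"
  have r: "r c ^ p = c" for c unfolding r_def using surj_f_inv_f[OF perfect] by metis
  define f where "f = (\<Sum>i\<le>degree g. monom (r (coeff g (p * i))) i)"
  have "f ^ p = (\<Sum>i\<le>degree g. monom (coeff g (p * i)) (i * p))"
    unfolding f_def
    by (subst freshmans_dream_sum) (use cp assms in \<open>auto simp: monom_power r\<close>)
  also have "\<dots> = g"
  proof (rule poly_eqI)
    fix n
    show "coeff (\<Sum>i\<le>degree g. monom (coeff g (p * i)) (i * p)) n = coeff g n"
    proof (cases "p dvd n")
      case True
      then obtain k where k: "n = p * k" by auto
      have "coeff (\<Sum>i\<le>degree g. monom (coeff g (p * i)) (i * p)) n
          = (\<Sum>i\<le>degree g. if i = k then coeff g (p * i) else 0)"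
        unfolding coeff_sum using p0 by (intro sum.cong) (auto simp: k)
      also have "\<dots> = (if k \<le> degree g then coeff g n else 0)"
        by (simp add: k)
      also have "\<dots> = coeff g n"
      proof -
        have "k \<le> n" using p0 k by simp
        thus ?thesis by (auto intro!: coeff_eq_0)
      qed
      finally show ?thesis .
    next
      case False
      then show ?thesis using g unfolding Kxp_def
        by (auto simp: coeff_sum intro!: sum.neutral)
    qed
  qed
  finally show ?thesis by blast
qed

lemma theta_add:
  assumes "CHAR('a::field) = p" "prime p"
  shows "theta p ((f::'a poly) + g) = theta p f + theta p g"
  unfolding theta_def by (simp add: frob_add[OF assms] D_add algebra_simps)

lemma theta_diff:
  assumes "CHAR('a::field) = p" "prime p"
  shows "theta p ((f::'a poly) - g) = theta p f - theta p g"
  using theta_add[OF assms, of "f - g" g] by (simp add: algebra_simps)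

lemma theta_zero:
  assumes "p > 0" shows "theta p (0::'a::field poly) = 0"
  unfolding theta_def using assms by (simp add: D_zero_poly)

lemma theta_Kxp:
  assumes "CHAR('a::field) = p" "prime p"
  shows "theta p (f::'a poly) \<in> Kxp p"
  unfolding theta_def using assms
  by (intro Kxp_add frob_Kxp D_Kxp) (auto simp: prime_gt_0_nat)

lemma D_deg_lt:
  assumes "CHAR('a::field) = p" "prime p" "(pderiv ^^ (p - 1)) (f::'a poly) \<noteq> 0"
  shows "degree ((pderiv ^^ (p - 1)) f) < degree f"
proof -
  have "p \<ge> 2" using assms prime_ge_2_nat by blast
  thus ?thesis using D_deg[OF assms(1) _ assms(3)] by simp
qed

lemma theta_deg:
  assumes "CHAR('a::field) = p" "prime p" "(f::'a poly) \<noteq> 0"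
  shows "degree (theta p f) = p * degree f \<and> lead_coeff (theta p f) = lead_coeff f ^ p"
proof (cases "(pderiv ^^ (p - 1)) f = 0")
  case True
  have "degree (f ^ p) = p * degree f" using assms by (simp add: degree_power_eq)
  then show ?thesis unfolding theta_def using True lead_coeff_power[of f p] by simp
next
  case False
  have p1: "p \<ge> 1" using assms prime_gt_0_nat by (simp add: Suc_le_eq)
  have lt: "degree ((pderiv ^^ (p - 1)) f) < degree (f ^ p)"
  proof -
    have "degree f \<le> p * degree f" using p1 by simp
    moreover have "degree (f ^ p) = p * degree f" using assms(3) by (simp add: degree_power_eq mult.commute)
    ultimately show ?thesis using D_deg_lt[OF assms(1,2) False] by linarith
  qed
  have d: "degree (theta p f) = degree (f ^ p)"
    unfolding theta_def by (rule degree_add_eq_left[OF lt])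
  have "lead_coeff (theta p f) = coeff (f ^ p) (degree (f ^ p)) + coeff ((pderiv ^^ (p - 1)) f) (degree (f ^ p))"
    using d by (simp add: theta_def)
  also have "\<dots> = lead_coeff f ^ p" using lt by (simp add: coeff_eq_0 lead_coeff_power)
  finally show ?thesis using d assms by (simp add: degree_power_eq)
qed

lemma theta_inj:
  assumes "CHAR('a::field) = p" "prime p"
  shows "inj (theta p :: 'a poly \<Rightarrow> 'a poly)"
proof (rule injI)
  fix f g :: "'a poly" assume "theta p f = theta p g"
  hence z: "theta p (f - g) = 0" by (simp add: theta_diff[OF assms])
  show "f = g"
  proof (rule ccontr)
    assume "f \<noteq> g"
    hence "f - g \<noteq> 0" by simp
    hence "lead_coeff (theta p (f - g)) = lead_coeff (f - g) ^ p" using theta_deg[OF assms, of "f - g"] by blast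
    moreover have "lead_coeff (f - g) ^ p \<noteq> 0" 
    proof -
      have "lead_coeff (f - g) \<noteq> 0" using \<open>f - g \<noteq> 0\<close> by (simp only: leading_coeff_0_iff) simp
      thus ?thesis by (rule power_not_zero)
    qed
    ultimately have "lead_coeff (theta p (f - g)) \<noteq> 0" by simp
    thus False using z by simp
  qed
qed

lemma theta_surj:
  assumes "CHAR('a::field) = p" "prime p" and perfect: "surj (\<lambda>x::'a. x ^ p)"
  shows "g \<in> Kxp p \<Longrightarrow> \<exists>f. theta p f = (g::'a poly)"
proof (induction "degree g" arbitrary: g rule: less_induct)
  case less
  have p0: "p > 0" using assms prime_gt_0_nat by blast
  show ?case
  proof (cases "g = 0")
    case True then show ?thesis using theta_zero[OF p0] by metis
  next
    case False
    obtain f0 where f0: "f0 ^ p = g" using frob_surj[OF assms less.prems] by blast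
    have f0nz: "f0 \<noteq> 0" using f0 False p0 by auto
    define h where "h = g - theta p f0"
    have h: "h = - (pderiv ^^ (p - 1)) f0" unfolding h_def theta_def f0[symmetric] by simp
    have "\<exists>f1. theta p f1 = h"
    proof (cases "h = 0")
      case True then show ?thesis using theta_zero[OF p0] by metis
    next
      case False
      hence nz: "(pderiv ^^ (p - 1)) f0 \<noteq> 0" using h by simp
      have "degree h < degree f0" using D_deg_lt[OF assms(1,2) nz] h by simp
      also have "\<dots> \<le> degree g" using f0 f0nz p0 by (auto simp: degree_power_eq)
      finally have "degree h < degree g" .
      moreover have "h \<in> Kxp p" unfolding h using D_Kxp[OF assms(1) p0] by (rule Kxp_uminus)
      ultimately show ?thesis using less.hyps by blast
    qed
    then obtain f1 where "theta p f1 = h" by blast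
    hence "theta p (f0 + f1) = g" by (simp add: theta_add[OF assms(1,2)] h_def)
    thus ?thesis by blast
  qed
qed

theorem lemma2p1:
  fixes p :: nat
  assumes char: "CHAR('a::field) = p" and ppos: "p > 0"
    and perfect: "surj (\<lambda>x::'a. x ^ p)"
  shows
    \<comment> \<open>(1) gr(theta) is the Frobenius, and the Frobenius is an F_p-algebra isomorphism onto K[x^p]\<close>
    "(\<forall>i (f::'a poly). f \<in> Kx_le i \<longrightarrow>
        theta p f - f ^ p \<in> Kxp p \<and>
        (theta p f - f ^ p = 0 \<or> degree (theta p f - f ^ p) < p * i))
     \<and> (\<forall>f g :: 'a poly. (f + g) ^ p = f ^ p + g ^ p)
     \<and> (\<forall>f g :: 'a poly. (f * g) ^ p = f ^ p * g ^ p)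
     \<and> (1::'a poly) ^ p = 1
     \<and> bij_betw (\<lambda>f::'a poly. f ^ p) UNIV (Kxp p)
     \<comment> \<open>(2) theta is an F_p-linear bijection onto K[x^p] respecting the filtrations exactly\<close>
     \<and> (\<forall>f g :: 'a poly. theta p (f + g) = theta p f + theta p g)
     \<and> bij_betw (theta p :: 'a poly \<Rightarrow> 'a poly) UNIV (Kxp p)
     \<and> (\<forall>i. theta p ` (Kx_le i :: 'a poly set) = Kxp_le p i)
     \<comment> \<open>(3) leading terms\<close>
     \<and> (\<forall>f :: 'a poly. lterm (theta p f) = lterm f ^ p)"
proof -
  have pr: "prime p" using prime_CHAR_semidom[where 'a='a] char ppos by simp
  have p1: "p \<ge> 1" using ppos by simp
  have c1: "\<forall>i (f::'a poly). f \<in> Kx_le i \<longrightarrow>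
        theta p f - f ^ p \<in> Kxp p \<and>
        (theta p f - f ^ p = 0 \<or> degree (theta p f - f ^ p) < p * i)"
  proof (intro allI impI conjI)
    fix i and f :: "'a poly" assume f: "f \<in> Kx_le i"
    have e: "theta p f - f ^ p = (pderiv ^^ (p - 1)) f" by (simp add: theta_def)
    show "theta p f - f ^ p \<in> Kxp p" unfolding e by (rule D_Kxp[OF char ppos])
    show "theta p f - f ^ p = 0 \<or> degree (theta p f - f ^ p) < p * i"
    proof (cases "(pderiv ^^ (p - 1)) f = 0")
      case False
      have "degree ((pderiv ^^ (p - 1)) f) < degree f" by (rule D_deg_lt[OF char pr False])
      moreover have "degree f \<le> i" using f by (simp add: Kx_le_def)
      moreover have "i \<le> p * i" using p1 by simp
      ultimately show ?thesis unfolding e by linarith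
    qed (simp add: e)
  qed
  have c2: "\<forall>f g :: 'a poly. (f + g) ^ p = f ^ p + g ^ p" using frob_add[OF char pr] by blast
  have c3: "\<forall>f g :: 'a poly. (f * g) ^ p = f ^ p * g ^ p" by (simp add: power_mult_distrib)
  have c5: "bij_betw (\<lambda>f::'a poly. f ^ p) UNIV (Kxp p)"
    unfolding bij_betw_def
    using frob_inj[OF char pr] frob_Kxp[OF char pr] frob_surj[OF char pr perfect] by blast
  have c6: "\<forall>f g :: 'a poly. theta p (f + g) = theta p f + theta p g" using theta_add[OF char pr] by blast
  have c7: "bij_betw (theta p :: 'a poly \<Rightarrow> 'a poly) UNIV (Kxp p)"
    unfolding bij_betw_def
    using theta_inj[OF char pr] theta_Kxp[OF char pr] theta_surj[OF char pr perfect] by blast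
  have c8: "\<forall>i. theta p ` (Kx_le i :: 'a poly set) = Kxp_le p i"
  proof (intro allI equalityI subsetI)
    fix i and g :: "'a poly" assume "g \<in> theta p ` Kx_le i"
    then obtain f where f: "g = theta p f" "degree f \<le> i" by (auto simp: Kx_le_def)
    have "degree g \<le> p * i"
    proof (cases "f = 0")
      case True then show ?thesis using f theta_zero[OF ppos, where 'a='a] by simp
    next
      case False then show ?thesis using f theta_deg[OF char pr False] by simp
    qed
    thus "g \<in> Kxp_le p i" using theta_Kxp[OF char pr] f by (simp add: Kxp_le_def)
  next
    fix i and g :: "'a poly" assume g: "g \<in> Kxp_le p i"
    then obtain f where f: "theta p f = g" using theta_surj[OF char pr perfect] by (auto simp: Kxp_le_def)
    have "degree f \<le> i"
    proof (cases "f = 0")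
      case False
      then have "p * degree f \<le> p * i" using f g theta_deg[OF char pr False] by (simp add: Kxp_le_def)
      thus ?thesis using ppos by simp
    qed simp
    thus "g \<in> theta p ` Kx_le i" using f by (auto simp: Kx_le_def)
  qed
  have c9: "\<forall>f :: 'a poly. lterm (theta p f) = lterm f ^ p"
  proof
    fix f :: "'a poly"
    show "lterm (theta p f) = lterm f ^ p"
    proof (cases "f = 0")
      case True then show ?thesis using theta_zero[OF ppos, where 'a='a] ppos by (simp add: lterm_def power_0_left)
    next
      case False
      have d: "degree (theta p f) = p * degree f" and l: "lead_coeff (theta p f) = lead_coeff f ^ p"
        using theta_deg[OF char pr False] by auto
      show ?thesis by (simp only: lterm_def l) (simp add: d monom_power mult.commute)
    qed
  qed
  show ?thesis using c1 c2 c3 c5 c6 c7 c8 c9 by simp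
qed

end
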